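(* Let $a, b$ be integers with $0 < a \le b$ and let $L_{a,b} = \{C_{i,1} : 1 \le i \le a+1\} \cup \{C_{1,j} : 1 < j \le b+1\}$, of size $n = a+b+1$. Then on the $n \times n$ board, $\mathrm{cp}_{\mathrm{free}}(L_{a,b}) \ge 2$.
   Context: For integers $i,j$, $C_{i,j}$ denotes the unit square cell in column $i$ and row $j$ of the integer grid (columns numbered left to right, rows numbered top to bottom). A polyomino is a finite set of cells; its size is its number of cells. For a polyomino $\mathcal{P}$ of size $n$ the board is $\mathbb{B} = \{C_{i,j} : 1 \le i,j \le n\}$. The shift of $\mathcal{P}$ by integers $(c,d)$ is $\mathcal{P}+(c,d) = \{C_{x+c,y+d} : C_{x,y} \in \mathcal{P}\}$. The rotations of $L_{a,b}$ by $90^\circ, 180^\circ, 270^\circ$ clockwise are $LR_{a,b} = \{C_{i,1} : 1 \le i \le b+1\} \cup \{C_{b+1,j} : 1 \le j \le a+1\}$, $LR^2_{a,b} = \{C_{i,b+1} : 1 \le i \le a+1\} \cup \{C_{a+1,j} : 1 \le j \le b+1\}$, $LR^3_{a,b} = \{C_{i,a+1} : 1 \le i \le b+1\} \cup \{C_{1,j} : 1 \le j \le a+1\}$ (reflections are not allowed). A free copy of $L_{a,b}$ is any shift of $L_{a,b}$, $LR_{a,b}$, $LR^2_{a,b}$ or $LR^3_{a,b}$. A set of polyominoes is a valid arrangement if each is contained in $\mathbb{B}$ and they are pairwise disjoint. A free packing of $\mathcal{P}$ is a set of free copies of $\mathcal{P}$ forming a valid arrangement such that adding any further free copy of $\mathcal{P}$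 yields an invalid arrangement. The clumsy free packing number $\mathrm{cp}_{\mathrm{free}}(\mathcal{P})$ is the minimum number of polyominoes in a free packing of $\mathcal{P}$ on the $n \times n$ board. *)

theory Defs
  imports Main
begin

text \<open>A cell C_{i,j} is the pair (i,j) :: int \<times> int (column i, row j).\<close>
type_synonym cell = "int \<times> int"

definition L :: "int \<Rightarrow> int \<Rightarrow> cell set" where
  "L a b = {(i,1) | i. 1 \<le> i \<and> i \<le> a+1} \<union> {(1,j) | j. 1 < j \<and> j \<le> b+1}"

definition LR :: "int \<Rightarrow> int \<Rightarrow> cell set" where
  "LR a b = {(i,1) | i. 1 \<le> i \<and> i \<le> b+1} \<union> {(b+1,j) | j. 1 \<le> j \<and> j \<le> a+1}"

definition LR2 :: "int \<Rightarrow> int \<Rightarrow> cell set" where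
  "LR2 a b = {(i,b+1) | i. 1 \<le> i \<and> i \<le> a+1} \<union> {(a+1,j) | j. 1 \<le> j \<and> j \<le> b+1}"

definition LR3 :: "int \<Rightarrow> int \<Rightarrow> cell set" where
  "LR3 a b = {(i,a+1) | i. 1 \<le> i \<and> i \<le> b+1} \<union> {(1,j) | j. 1 \<le> j \<and> j \<le> a+1}"

definition shift :: "cell set \<Rightarrow> int \<Rightarrow> int \<Rightarrow> cell set" where
  "shift P c d = {(x+c, y+d) | x y. (x,y) \<in> P}"

definition board :: "int \<Rightarrow> cell set" where
  "board n = {(i,j) | i j. 1 \<le> i \<and> i \<le> n \<and> 1 \<le> j \<and> j \<le> n}"

definition free_copy :: "int \<Rightarrow> int \<Rightarrow> cell set \<Rightarrow> bool" where
  "free_copy a b Q \<longleftrightarrow> (\<exists>c d. Q = shift (L a b) c d \<or> Q = shift (LR a b) c d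
      \<or> Q = shift (LR2 a b) c d \<or> Q = shift (LR3 a b) c d)"

definition valid_arrangement :: "int \<Rightarrow> cell set set \<Rightarrow> bool" where
  "valid_arrangement n S \<longleftrightarrow> (\<forall>P\<in>S. P \<subseteq> board n) \<and>
      (\<forall>P\<in>S. \<forall>Q\<in>S. P \<noteq> Q \<longrightarrow> P \<inter> Q = {})"

definition free_packing :: "int \<Rightarrow> int \<Rightarrow> cell set set \<Rightarrow> bool" where
  "free_packing a b S \<longleftrightarrow> (\<forall>Q\<in>S. free_copy a b Q) \<and> valid_arrangement (a+b+1) S \<and>
      (\<forall>Q. free_copy a b Q \<and> Q \<notin> S \<longrightarrow> \<not> valid_arrangement (a+b+1) (insert Q S))"

definition cp_free :: "int \<Rightarrow> int \<Rightarrow> nat" where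
  "cp_free a b = (LEAST k. \<exists>S. free_packing a b S \<and> card S = k)"

end

theory Submission
  imports Defs
begin

lemma mshift: "(x,y) \<in> shift P c d \<longleftrightarrow> (x-c,y-d) \<in> P"
  unfolding shift_def by force

lemma mL: "(x,y) \<in> shift (L a b) c d \<longleftrightarrow> (y = d+1 \<and> c+1 \<le> x \<and> x \<le> c+a+1) \<or> (x = c+1 \<and> d+1 < y \<and> y \<le> d+b+1)"
  unfolding mshift L_def by auto
lemma mLR: "(x,y) \<in> shift (LR a b) c d \<longleftrightarrow> (y = d+1 \<and> c+1 \<le> x \<and> x \<le> c+b+1) \<or> (x = c+b+1 \<and> d+1 \<le> y \<and> y \<le> d+a+1)"
  unfolding mshift LR_def by auto
lemma mLR2: "(x,y) \<in> shift (LR2 a b) c d \<longleftrightarrow> (y = d+b+1 \<and> c+1 \<le> x \<and> x \<le> c+a+1) \<or> (x = c+a+1 \<and> d+1 \<le> y \<and> y \<le> d+b+1)"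
  unfolding mshift LR2_def by auto
lemma mLR3: "(x,y) \<in> shift (LR3 a b) c d \<longleftrightarrow> (y = d+a+1 \<and> c+1 \<le> x \<and> x \<le> c+b+1) \<or> (x = c+1 \<and> d+1 \<le> y \<and> y \<le> d+a+1)"
  unfolding mshift LR3_def by auto
lemma mB: "(x,y) \<in> board n \<longleftrightarrow> 1 \<le> x \<and> x \<le> n \<and> 1 \<le> y \<and> y \<le> n"
  unfolding board_def by auto

lemma subB: "(\<And>x y. (x,y) \<in> A \<Longrightarrow> 1 \<le> x \<and> x \<le> n \<and> 1 \<le> y \<and> y \<le> n) \<Longrightarrow> A \<subseteq> board n"
  using mB by auto
lemma disj: "(\<And>x y. (x,y) \<in> A \<Longrightarrow> (x,y) \<in> B \<Longrightarrow> False) \<Longrightarrow> A \<inter> B = {}"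
  by auto

lemmas ms = mL mLR mLR2 mLR3

lemma fc: "free_copy a b (shift (L a b) c d)" "free_copy a b (shift (LR a b) c d)"
  "free_copy a b (shift (LR2 a b) c d)" "free_copy a b (shift (LR3 a b) c d)"
  unfolding free_copy_def by blast+

definition good where "good a b P \<longleftrightarrow> (\<exists>Q. free_copy a b Q \<and> Q \<subseteq> board (a+b+1) \<and> P \<inter> Q = {})"

lemma goodI: "free_copy a b Q \<Longrightarrow> Q \<subseteq> board (a+b+1) \<Longrightarrow> P \<inter> Q = {} \<Longrightarrow> good a b P"
  unfolding good_def by blast

lemma caseL:
  assumes "0 < a" "a \<le> b" "shift (L a b) c d \<subseteq> board (a+b+1)"
  shows "good a b (shift (L a b) c d)"
proof -
  have "(c+1,d+1) \<in> board (a+b+1)" "(c+a+1,d+1) \<in> board (a+b+1)" "(c+1,d+b+1) \<in> board (a+b+1)"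
    using assms by (auto simp: ms)
  hence h: "0 \<le> c" "c \<le> b" "0 \<le> d" "d \<le> a" by (auto simp: mB)
  consider "c < b" "d < a" | "1 \<le> c" "1 \<le> d" | "c = 0" "d = a" | "c = b" "d = 0"
    using h assms by linarith
  then show ?thesis
  proof cases
    case 1 show ?thesis
      by (rule goodI[OF fc(1)[of a b "c+1" "d+1"]]; rule subB disj; use 1 h assms in \<open>auto simp: ms\<close>)
  next
    case 2 show ?thesis
      by (rule goodI[OF fc(1)[of a b "c-1" "d-1"]]; rule subB disj; use 2 h assms in \<open>auto simp: ms\<close>)
  next
    case 3 show ?thesis
      by (rule goodI[OF fc(2)[of a b a 0]]; rule subB disj; use 3 h assms in \<open>auto simp: ms\<close>)
  next
    case 4 show ?thesis
      by (rule goodI[OF fc(4)[of a b 0 b]]; rule subB disj; use 4 h assms in \<open>auto simp: ms\<close>)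
  qed
qed

lemma caseLR:
  assumes "0 < a" "a \<le> b" "shift (LR a b) c d \<subseteq> board (a+b+1)"
  shows "good a b (shift (LR a b) c d)"
proof -
  have "(c+1,d+1) \<in> board (a+b+1)" "(c+b+1,d+1) \<in> board (a+b+1)" "(c+b+1,d+a+1) \<in> board (a+b+1)"
    using assms by (auto simp: ms)
  hence h: "0 \<le> c" "c \<le> a" "0 \<le> d" "d \<le> b" by (auto simp: mB)
  consider "1 \<le> c" "d < b" | "c < a" "1 \<le> d" | "c = 0" "d = 0" | "c = a" "d = b"
    using h assms by linarith
  then show ?thesis
  proof cases
    case 1 show ?thesis
      by (rule goodI[OF fc(2)[of a b "c-1" "d+1"]]; rule subB disj; use 1 h assms in \<open>auto simp: ms\<close>)
  next
    case 2 show ?thesis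
      by (rule goodI[OF fc(2)[of a b "c+1" "d-1"]]; rule subB disj; use 2 h assms in \<open>auto simp: ms\<close>)
  next
    case 3 show ?thesis
      by (rule goodI[OF fc(3)[of a b "b" "a"]]; rule subB disj; use 3 h assms in \<open>auto simp: ms\<close>)
  next
    case 4 show ?thesis
      by (rule goodI[OF fc(1)[of a b "0" "0"]]; rule subB disj; use 4 h assms in \<open>auto simp: ms\<close>)
  qed
qed

lemma caseLR2:
  assumes "0 < a" "a \<le> b" "shift (LR2 a b) c d \<subseteq> board (a+b+1)"
  shows "good a b (shift (LR2 a b) c d)"
proof -
  have "(c+1,d+b+1) \<in> board (a+b+1)" "(c+a+1,d+b+1) \<in> board (a+b+1)" "(c+a+1,d+1) \<in> board (a+b+1)"
    using assms by (auto simp: ms)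
  hence h: "0 \<le> c" "c \<le> b" "0 \<le> d" "d \<le> a" by (auto simp: mB)
  consider "c < b" "d < a" | "1 \<le> c" "1 \<le> d" | "c = 0" "d = a" | "c = b" "d = 0"
    using h assms by linarith
  then show ?thesis
  proof cases
    case 1 show ?thesis
      by (rule goodI[OF fc(3)[of a b "c+1" "d+1"]]; rule subB disj; use 1 h assms in \<open>auto simp: ms\<close>)
  next
    case 2 show ?thesis
      by (rule goodI[OF fc(3)[of a b "c-1" "d-1"]]; rule subB disj; use 2 h assms in \<open>auto simp: ms\<close>)
  next
    case 3 show ?thesis
      by (rule goodI[OF fc(2)[of a b "a" "0"]]; rule subB disj; use 3 h assms in \<open>auto simp: ms\<close>)
  next
    case 4 show ?thesis
      by (rule goodI[OF fc(4)[of a b "0" "b"]]; rule subB disj; use 4 h assms in \<open>auto simp: ms\<close>)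
  qed
qed

lemma caseLR3:
  assumes "0 < a" "a \<le> b" "shift (LR3 a b) c d \<subseteq> board (a+b+1)"
  shows "good a b (shift (LR3 a b) c d)"
proof -
  have "(c+1,d+a+1) \<in> board (a+b+1)" "(c+b+1,d+a+1) \<in> board (a+b+1)" "(c+1,d+1) \<in> board (a+b+1)"
    using assms by (auto simp: ms)
  hence h: "0 \<le> c" "c \<le> a" "0 \<le> d" "d \<le> b" by (auto simp: mB)
  consider "c < a" "1 \<le> d" | "1 \<le> c" "d < b" | "c = 0" "d = 0" | "c = a" "d = b"
    using h assms by linarith
  then show ?thesis
  proof cases
    case 1 show ?thesis
      by (rule goodI[OF fc(4)[of a b "c+1" "d-1"]]; rule subB disj; use 1 h assms in \<open>auto simp: ms\<close>)
  next
    case 2 show ?thesis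
      by (rule goodI[OF fc(4)[of a b "c-1" "d+1"]]; rule subB disj; use 2 h assms in \<open>auto simp: ms\<close>)
  next
    case 3 show ?thesis
      by (rule goodI[OF fc(3)[of a b "b" "a"]]; rule subB disj; use 3 h assms in \<open>auto simp: ms\<close>)
  next
    case 4 show ?thesis
      by (rule goodI[OF fc(1)[of a b "0" "0"]]; rule subB disj; use 4 h assms in \<open>auto simp: ms\<close>)
  qed
qed

lemma good_all:
  assumes "0 < a" "a \<le> b" "free_copy a b P" "P \<subseteq> board (a+b+1)"
  shows "good a b P"
  using assms caseL caseLR caseLR2 caseLR3 unfolding free_copy_def by blast

lemma fc_ne: "free_copy a b P \<Longrightarrow> 0 \<le> a \<Longrightarrow> 0 \<le> b \<Longrightarrow> P \<noteq> {}"
  unfolding free_copy_def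
proof (elim exE disjE)
  fix c d assume "0 \<le> a" "0 \<le> b"
  { assume "P = shift (L a b) c d" thus "P \<noteq> {}" using \<open>0 \<le> a\<close> \<open>0 \<le> b\<close> mL[of "c+1" "d+1" a b c d] by auto }
  { assume "P = shift (LR a b) c d" thus "P \<noteq> {}" using \<open>0 \<le> a\<close> \<open>0 \<le> b\<close> mLR[of "c+1" "d+1" a b c d] by auto }
  { assume "P = shift (LR2 a b) c d" thus "P \<noteq> {}" using \<open>0 \<le> a\<close> \<open>0 \<le> b\<close> mLR2[of "c+a+1" "d+1" a b c d] by auto }
  { assume "P = shift (LR3 a b) c d" thus "P \<noteq> {}" using \<open>0 \<le> a\<close> \<open>0 \<le> b\<close> mLR3[of "c+1" "d+1" a b c d] by auto }
qed

lemma fin_board: "finite (board n)"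
proof -
  have "board n \<subseteq> {1..n} \<times> {1..n}" by (auto simp: mB)
  thus ?thesis by (rule finite_subset) auto
qed

lemma packing_fin:
  assumes "free_packing a b S" shows "finite S"
proof -
  have "S \<subseteq> Pow (board (a+b+1))" using assms unfolding free_packing_def valid_arrangement_def by auto
  thus ?thesis using fin_board by (meson finite_Pow_iff finite_subset)
qed

lemma packing_exists:
  assumes "0 < a" "a \<le> b"
  shows "\<exists>S. free_packing a b S"
proof -
  define n where "n = a+b+1"
  define F where "F = {S. S \<subseteq> Pow (board n) \<and> (\<forall>Q\<in>S. free_copy a b Q) \<and> valid_arrangement n S}"
  have "F \<subseteq> Pow (Pow (board n))" unfolding F_def by auto
  hence finF: "finite F" using fin_board[of n] by (meson finite_Pow_iff finite_subset)
  have "{} \<in> F" unfolding F_def valid_arrangement_def by auto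
  hence ne: "card ` F \<noteq> {}" by auto
  obtain S where SF: "S \<in> F" and SM: "card S = Max (card ` F)"
    using Max_in[OF finite_imageI[OF finF] ne] by auto
  have "S \<subseteq> Pow (board n)" using SF unfolding F_def by auto
  hence finS: "finite S" using fin_board[of n] by (meson finite_Pow_iff finite_subset)
  have "free_packing a b S"
    unfolding free_packing_def
  proof (intro conjI allI impI)
    show "\<forall>Q\<in>S. free_copy a b Q" using SF F_def by auto
    show "valid_arrangement (a+b+1) S" using SF F_def n_def by auto
  next
    fix Q assume Q: "free_copy a b Q \<and> Q \<notin> S"
    show "\<not> valid_arrangement (a+b+1) (insert Q S)"
    proof
      assume v: "valid_arrangement (a+b+1) (insert Q S)"
      hence "insert Q S \<in> F" using SF Q unfolding F_def n_def valid_arrangement_def by auto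
      hence "card (insert Q S) \<le> Max (card ` F)" using finF by auto
      moreover have "card (insert Q S) = card S + 1" using finS Q by auto
      ultimately show False using SM by auto
    qed
  qed
  thus ?thesis by blast
qed

lemma no_small:
  assumes "0 < a" "a \<le> b" "free_packing a b S"
  shows "2 \<le> card S"
proof (rule ccontr)
  assume "\<not> 2 \<le> card S"
  hence "card S = 0 \<or> card S = 1" by auto
  moreover have fin: "finite S" using packing_fin assms by auto
  ultimately have "S = {} \<or> (\<exists>P. S = {P})" using card_1_singletonE by auto
  thus False
  proof
    assume S: "S = {}"
    have "shift (L a b) 0 0 \<subseteq> board (a+b+1)" by (rule subB) (use assms in \<open>auto simp: ms\<close>)
    hence "valid_arrangement (a+b+1) (insert (shift (L a b) 0 0) S)"
      unfolding S valid_arrangement_def by auto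
    thus False using assms(3) fc(1)[of a b 0 0] S unfolding free_packing_def by auto
  next
    assume "\<exists>P. S = {P}"
    then obtain P where S: "S = {P}" by auto
    have fP: "free_copy a b P" and PB: "P \<subseteq> board (a+b+1)"
      using assms(3) S unfolding free_packing_def valid_arrangement_def by auto
    obtain Q where Q: "free_copy a b Q" "Q \<subseteq> board (a+b+1)" "P \<inter> Q = {}"
      using good_all[OF assms(1,2) fP PB] unfolding good_def by auto
    have "Q \<noteq> {}" using fc_ne[OF Q(1)] assms by auto
    hence "Q \<noteq> P" using Q(3) by auto
    hence "valid_arrangement (a+b+1) (insert Q S)"
      using Q PB S unfolding valid_arrangement_def by auto
    thus False using assms(3) Q(1) S \<open>Q \<noteq> P\<close> unfolding free_packing_def by auto
  qed
qed

theorem lemma1: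
  fixes a b :: int
  assumes "0 < a" and "a \<le> b"
  shows "2 \<le> cp_free a b"
proof -
  obtain S where S: "free_packing a b S" using packing_exists[OF assms] by auto
  have "\<exists>S. free_packing a b S \<and> card S = (LEAST k. \<exists>S. free_packing a b S \<and> card S = k)"
    by (rule LeastI_ex) (use S in blast)
  then obtain T where "free_packing a b T" "card T = cp_free a b" unfolding cp_free_def by auto
  thus ?thesis using no_small[OF assms] by metis
qed

end
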